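(* Let $m,\nu$ be positive integers with $\nu\ge2$ and $\ell(m)\ge\nu-1$, where $\ell(m)$ is the number of prime factors of $m$ counted with multiplicity. Then there exists a numerical semigroup $S$ with multiplicity $m(S)=m$, embedding dimension $\nu(S)=\nu$, and $\alpha$-rectangular Apéry set.
   Context: A numerical semigroup is a submonoid $S$ of $(\mathbb N,+)$ with finite complement in $\mathbb N$; $g_1<\dots<g_\nu$ is its minimal system of generators, $\nu(S)=\nu$ its embedding dimension, $m(S)=g_1$ its multiplicity, and $\mathrm{Ap}(S)=\{s\in S: s-m(S)\notin S\}$. For $i=2,\dots,\nu$, $\alpha_i=\max\{h\in\mathbb N: hg_i\in\mathrm{Ap}(S)\}$, and $\mathrm{Ap}(S)$ is $\alpha$-rectangular if $\mathrm{Ap}(S)=\{\sum_{i=2}^\nu\lambda_ig_i: 0\le\lambda_i\le\alpha_i\}$. *)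

theory Defs
  imports "HOL-Computational_Algebra.Computational_Algebra"
begin

definition numerical_semigroup :: "nat set \<Rightarrow> bool" where
  "numerical_semigroup S \<longleftrightarrow> 0 \<in> S \<and> (\<forall>a\<in>S. \<forall>b\<in>S. a + b \<in> S) \<and> finite (UNIV - S)"

definition min_gens :: "nat set \<Rightarrow> nat set" where
  "min_gens S = {s \<in> S. s \<noteq> 0 \<and> \<not> (\<exists>a\<in>S. \<exists>b\<in>S. a \<noteq> 0 \<and> b \<noteq> 0 \<and> a + b = s)}"

definition embedding_dimension :: "nat set \<Rightarrow> nat" where
  "embedding_dimension S = card (min_gens S)"

definition multiplicity_ns :: "nat set \<Rightarrow> nat" where
  "multiplicity_ns S = Min (min_gens S)"

definition apery :: "nat set \<Rightarrow> nat set" where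
  "apery S = {s \<in> S. \<not> (multiplicity_ns S \<le> s \<and> s - multiplicity_ns S \<in> S)}"

definition alpha_ns :: "nat set \<Rightarrow> nat \<Rightarrow> nat" where
  "alpha_ns S g = Max {h. h * g \<in> apery S}"

definition alpha_rectangular :: "nat set \<Rightarrow> bool" where
  "alpha_rectangular S \<longleftrightarrow>
     (let G = min_gens S - {multiplicity_ns S} in
      apery S = {(\<Sum>g\<in>G. lam g * g) | lam. \<forall>g\<in>G. lam g \<le> alpha_ns S g})"

end

theory Submission
  imports Defs
begin

lemma factor_split:
  fixes m n :: nat
  assumes "m > 0" "n \<ge> 1" "size (prime_factorization m) \<ge> n"
  shows "\<exists>d. (\<forall>i<n. 2 \<le> d i) \<and> (\<Prod>i<n. d i) = m"
  using assms
proof (induction n arbitrary: m)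
  case 0 then show ?case by simp
next
  case (Suc n)
  show ?case
  proof (cases "n = 0")
    case True
    have "m \<noteq> 1" using Suc.prems by auto
    then show ?thesis using True Suc.prems by (intro exI[of _ "\<lambda>_. m"]) auto
  next
    case False
    have "prime_factorization m \<noteq> {#}" using Suc.prems by auto
    then obtain p where p: "p \<in># prime_factorization m" by blast
    hence pp: "prime p" and pd: "p dvd m" by auto
    define m' where "m' = m div p"
    have mm: "m = m' * p" using pd m'_def by auto
    have m'0: "m' > 0" using mm Suc.prems by (cases m') auto
    have "prime_factorization m = prime_factorization m' + prime_factorization p"
      using mm m'0 pp by (simp add: prime_factorization_mult prime_gt_0_nat)
    hence "size (prime_factorization m') \<ge> n" using Suc.prems pp
      by (simp add: prime_factorization_prime)
    then obtain d where d: "\<forall>i<n. 2 \<le> d i" "(\<Prod>i<n. d i) = m'"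
      using Suc.IH[OF m'0] False by auto
    show ?thesis
      apply (rule exI[of _ "d(n := p)"])
      using d pp mm prime_ge_2_nat[OF pp] by (auto simp: less_Suc_eq)
  qed
qed


lemma sum_sub_at:
  fixes f w :: "nat \<Rightarrow> nat"
  assumes "j < n" "c \<le> f j"
  shows "(\<Sum>i<n. f i * w i) = (\<Sum>i<n. (f i - (if i = j then c else 0)) * w i) + c * w j"
proof -
  have "(\<Sum>i<n. f i * w i) = (\<Sum>i<n. (f i - (if i = j then c else 0)) * w i + (if i = j then c * w j else 0))"
    using assms by (intro sum.cong) (auto simp: diff_mult_distrib)
  also have "\<dots> = (\<Sum>i<n. (f i - (if i = j then c else 0)) * w i) + c * w j"
    using assms by (simp add: sum.distrib)
  finally show ?thesis .
qed

lemma sum_add_at: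
  fixes f w :: "nat \<Rightarrow> nat"
  shows "(\<Sum>i<n. (f i + (if i = k then 1 else 0)) * w i) = (\<Sum>i<n. f i * w i) + (if k < n then w k else 0)"
proof -
  have "(\<Sum>i<n. (f i + (if i = k then 1 else 0)) * w i) = (\<Sum>i<n. f i * w i + (if i = k then w k else 0))"
    by (intro sum.cong) (auto simp: distrib_right)
  also have "\<dots> = (\<Sum>i<n. f i * w i) + (if k < n then w k else 0)"
    by (simp add: sum.distrib)
  finally show ?thesis .
qed

lemma sucmul: "1 \<le> k \<Longrightarrow> (k::nat) * x = x + (k - 1) * x"
  by (cases k) auto

locale rect =
  fixes d :: "nat \<Rightarrow> nat" and n :: nat
  assumes d2: "\<And>i. i < n \<Longrightarrow> 2 \<le> d i" and npos: "0 < n"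
begin

definition M :: "nat \<Rightarrow> nat" where "M i = (\<Prod>j<i. d j)"
definition mm :: nat where "mm = M n"
definition g :: "nat \<Rightarrow> nat" where "g i = mm + M i"
definition val :: "(nat \<Rightarrow> nat) \<Rightarrow> nat" where "val \<mu> = (\<Sum>i<n. \<mu> i * g i)"
definition SS :: "nat set" where "SS = {a * mm + val \<mu> | a \<mu>. True}"
definition RR :: "nat set" where "RR = {val lam | lam. \<forall>i<n. lam i < d i}"

lemma M_0[simp]: "M 0 = 1" by (simp add: M_def)
lemma M_Suc: "M (Suc i) = M i * d i" by (simp add: M_def)

lemma d_pos: "j < n \<Longrightarrow> 0 < d j"
proof -
  assume "j < n"
  then have "2 \<le> d j" by (rule d2)
  then show ?thesis by simp
qed

lemma M_pos: "i \<le> n \<Longrightarrow> 0 < M i"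
proof -
  assume i: "i \<le> n"
  have "\<forall>j\<in>{..<i}. 0 < d j"
  proof
    fix j assume "j \<in> {..<i}"
    then have "j < n" using i by simp
    then show "0 < d j" by (rule d_pos)
  qed
  then show ?thesis unfolding M_def by (intro prod_pos) blast
qed

lemma M_less: "i < j \<Longrightarrow> j \<le> n \<Longrightarrow> M i < M j"
proof (induction j)
  case 0 then show ?case by simp
next
  case (Suc j)
  have "M j < M (Suc j)"
    using M_pos[of j] d2[of j] Suc.prems by (simp add: M_Suc)
  then show ?case using Suc by (cases "i = j") auto
qed

lemma mm_gt1: "1 < mm" using M_less[of 0 n] npos by (simp add: mm_def)

lemma M_lt_mm: "i < n \<Longrightarrow> M i < mm" using M_less[of i n] by (simp add: mm_def)

lemma bound: "k \<le> n \<Longrightarrow> (\<forall>i<k. lam i < d i) \<Longrightarrow> (\<Sum>i<k. lam i * M i) < M k"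
proof (induction k)
  case 0 then show ?case by simp
next
  case (Suc k)
  have IH: "(\<Sum>i<k. lam i * M i) < M k" using Suc by auto
  have "Suc (lam k) \<le> d k" using Suc.prems by auto
  hence "Suc (lam k) * M k \<le> d k * M k" by (rule mult_le_mono1)
  hence "(\<Sum>i<k. lam i * M i) + lam k * M k < d k * M k" using IH by simp
  then show ?case by (simp add: M_Suc mult.commute)
qed

lemma uniq: "k \<le> n \<Longrightarrow> (\<forall>i<k. lam i < d i) \<Longrightarrow> (\<forall>i<k. lam' i < d i) \<Longrightarrow>
   (\<Sum>i<k. lam i * M i) = (\<Sum>i<k. lam' i * M i) \<Longrightarrow> \<forall>i<k. lam i = lam' i"
proof (induction k)
  case 0 then show ?case by simp
next
  case (Suc k)
  define A where "A = (\<Sum>i<k. lam i * M i)"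
  define A' where "A' = (\<Sum>i<k. lam' i * M i)"
  have A: "A < M k" using bound[of k lam] Suc.prems by (auto simp: A_def)
  have A': "A' < M k" using bound[of k lam'] Suc.prems by (auto simp: A'_def)
  have eq: "A + lam k * M k = A' + lam' k * M k" using Suc.prems(4) by (simp add: A_def A'_def)
  have Mk: "0 < M k" using M_pos[of k] Suc.prems by simp
  have f1: "(A + lam k * M k) div M k = lam k + A div M k" using Mk by simp
  have f2: "(A' + lam' k * M k) div M k = lam' k + A' div M k" using Mk by simp
  have f3: "A div M k = 0" "A' div M k = 0" using A A' by simp_all
  have "lam k = (A + lam k * M k) div M k" using f1 f3 by simp
  also have "\<dots> = (A' + lam' k * M k) div M k" using eq by simp
  also have "\<dots> = lam' k" using f2 f3 by simp
  finally have lk: "lam k = lam' k" .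
  hence AA: "A = A'" using eq by simp
  have p1: "k \<le> n" using Suc.prems(1) by simp
  have p2: "\<forall>i<k. lam i < d i" using Suc.prems(2) by simp
  have p3: "\<forall>i<k. lam' i < d i" using Suc.prems(3) by simp
  have "\<forall>i<k. lam i = lam' i" using Suc.IH[OF p1 p2 p3] AA unfolding A_def A'_def by blast
  then show ?case using lk by (auto simp: less_Suc_eq)
qed

lemma val_eq: "val \<mu> = (\<Sum>i<n. \<mu> i) * mm + (\<Sum>i<n. \<mu> i * M i)"
  by (simp add: val_def g_def distrib_left sum.distrib sum_distrib_right)

lemma dg: "i < n \<Longrightarrow> d i * g i = d i * mm + M (Suc i)"
  by (simp add: g_def M_Suc algebra_simps)

lemma normalize: "\<exists>lam c. (\<forall>i<n. lam i < d i) \<and> val \<mu> = val lam + c * mm"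
proof (induction "\<Sum>i<n. \<mu> i" arbitrary: \<mu> rule: less_induct)
  case less
  show ?case
  proof (cases "\<forall>i<n. \<mu> i < d i")
    case True then show ?thesis by (intro exI[of _ \<mu>] exI[of _ 0]) auto
  next
    case False
    then obtain j where j: "j < n" "d j \<le> \<mu> j" by (auto simp: not_less)
    define \<mu>1 where "\<mu>1 = (\<lambda>i. \<mu> i - (if i = j then d j else 0))"
    define \<mu>' where "\<mu>' = (\<lambda>i. \<mu>1 i + (if i = Suc j then 1 else 0))"
    have v1: "val \<mu> = val \<mu>1 + d j * g j"
      unfolding val_def \<mu>1_def by (rule sum_sub_at[where f=\<mu> and w=g and j=j and c="d j", OF j])
    have v2: "val \<mu>' = val \<mu>1 + (if Suc j < n then g (Suc j) else 0)"
      unfolding val_def \<mu>'_def by (rule sum_add_at)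
    have s1: "(\<Sum>i<n. \<mu> i) = (\<Sum>i<n. \<mu>1 i) + d j"
      using sum_sub_at[where f=\<mu> and w="\<lambda>_. 1" and j=j and c="d j", OF j] by (simp add: \<mu>1_def)
    have s2: "(\<Sum>i<n. \<mu>' i) = (\<Sum>i<n. \<mu>1 i) + (if Suc j < n then 1 else 0)"
      using sum_add_at[of \<mu>1 "Suc j" "\<lambda>_. 1" n] by (simp add: \<mu>'_def)
    have "(\<Sum>i<n. \<mu>' i) < (\<Sum>i<n. \<mu> i)" using s1 s2 d2[OF j(1)] by auto
    then obtain lam c where lc: "\<forall>i<n. lam i < d i" "val \<mu>' = val lam + c * mm"
      using less by blast
    have dj: "d j * g j = d j * mm + M (Suc j)" using dg[OF j(1)] .
    show ?thesis
    proof (cases "Suc j < n")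
      case True
      have e: "d j * mm = mm + (d j - 1) * mm" using d2[OF j(1)] by (cases "d j") auto
      have gs: "g (Suc j) = mm + M (Suc j)" by (simp add: g_def)
      have v2': "val \<mu>' = val \<mu>1 + g (Suc j)" using v2 True by simp
      have "val \<mu> = val \<mu>' + (d j - 1) * mm"
        using v1 v2' dj e gs by linarith
      then show ?thesis using lc by (intro exI[of _ lam] exI[of _ "c + (d j - 1)"]) (simp add: algebra_simps)
    next
      case False
      hence "Suc j = n" using j by simp
      hence "val \<mu> = val \<mu>' + (d j + 1) * mm"
        using v1 v2 dj by (simp add: mm_def algebra_simps)
      then show ?thesis using lc by (intro exI[of _ lam] exI[of _ "c + (d j + 1)"]) (simp add: algebra_simps)
    qed
  qed
qed

lemma SS_add: "x \<in> SS \<Longrightarrow> y \<in> SS \<Longrightarrow> x + y \<in> SS"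
proof -
  assume "x \<in> SS" "y \<in> SS"
  then obtain a \<mu> b \<nu> where "x = a * mm + val \<mu>" "y = b * mm + val \<nu>" by (auto simp: SS_def)
  moreover have "val (\<lambda>i. \<mu> i + \<nu> i) = val \<mu> + val \<nu>"
    by (simp add: val_def distrib_right sum.distrib)
  ultimately have "x + y = (a + b) * mm + val (\<lambda>i. \<mu> i + \<nu> i)" by (simp add: algebra_simps)
  then show ?thesis unfolding SS_def by blast
qed

lemma val0: "val (\<lambda>_. 0) = 0" by (simp add: val_def)

lemma SS_0: "0 \<in> SS" unfolding SS_def using val0 by (auto intro!: exI[of _ 0] exI[of _ "\<lambda>_. 0"])
lemma SS_mm: "mm \<in> SS" unfolding SS_def using val0 by (auto intro!: exI[of _ 1] exI[of _ "\<lambda>_. 0"])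
lemma SS_val: "val \<mu> \<in> SS" unfolding SS_def by (auto intro!: exI[of _ 0])

lemma val_single: "i < n \<Longrightarrow> val (\<lambda>k. if k = i then h else 0) = h * g i"
proof -
  assume "i < n"
  have "val (\<lambda>k. if k = i then h else 0) = (\<Sum>k<n. if k = i then h * g i else 0)"
    unfolding val_def by (intro sum.cong) auto
  then show ?thesis using \<open>i < n\<close> by simp
qed

lemma SS_g: "i < n \<Longrightarrow> g i \<in> SS"
  using SS_val[of "\<lambda>k. if k = i then 1 else 0"] val_single[of i 1] by simp

lemma SS_mult: "x \<in> SS \<Longrightarrow> k * x \<in> SS"
  by (induction k) (auto simp: SS_0 SS_add)

lemma SS_ge: "x \<in> SS \<Longrightarrow> x \<noteq> 0 \<Longrightarrow> mm \<le> x"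
proof -
  assume "x \<in> SS" "x \<noteq> 0"
  then obtain a \<mu> where x: "x = a * mm + val \<mu>" by (auto simp: SS_def)
  show ?thesis
  proof (cases "a = 0")
    case False then show ?thesis using x by (cases a) auto
  next
    case True
    show ?thesis
    proof (cases "(\<Sum>i<n. \<mu> i) = 0")
      case True
      then have "\<forall>i<n. \<mu> i = 0" by simp
      then have "val \<mu> = 0" by (simp add: val_def)
      then show ?thesis using x \<open>a = 0\<close> \<open>x \<noteq> 0\<close> by simp
    next
      case False
      then have "1 * mm \<le> (\<Sum>i<n. \<mu> i) * mm" by (intro mult_le_mono1) linarith
      then show ?thesis using x val_eq[of \<mu>] by linarith
    qed
  qed
qed

lemma SS_norm: "x \<in> SS \<Longrightarrow> \<exists>lam c. (\<forall>i<n. lam i < d i) \<and> x = val lam + c * mm"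
proof -
  assume "x \<in> SS"
  then obtain a \<mu> where x: "x = a * mm + val \<mu>" by (auto simp: SS_def)
  obtain lam c where "\<forall>i<n. lam i < d i" "val \<mu> = val lam + c * mm" using normalize by blast
  then show ?thesis using x by (intro exI[of _ lam] exI[of _ "a + c"]) (simp add: algebra_simps)
qed

lemma g_gt: "i < n \<Longrightarrow> mm < g i" using M_pos[of i] by (simp add: g_def)
lemma g_lt2: "i < n \<Longrightarrow> g i < 2 * mm" using M_lt_mm[of i] by (simp add: g_def)

lemma g_mono: "i < j \<Longrightarrow> j < n \<Longrightarrow> g i < g j"
  using M_less[of i j] by (simp add: g_def)

lemma mm_notin: "mm \<notin> g ` {..<n}"
proof
  assume "mm \<in> g ` {..<n}"
  then obtain i where "i < n" "mm = g i" by auto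
  then show False using g_gt[of i] by simp
qed

lemma inj_g: "inj_on g {..<n}"
proof (rule inj_onI)
  fix i j assume ij: "i \<in> {..<n}" "j \<in> {..<n}" "g i = g j"
  show "i = j"
  proof (rule ccontr)
    assume "i \<noteq> j"
    hence "i < j \<or> j < i" by linarith
    then show False
    proof
      assume "i < j" thus False using g_mono[of i j] ij by simp
    next
      assume "j < i" thus False using g_mono[of j i] ij by simp
    qed
  qed
qed

lemma numsg: "numerical_semigroup SS"
proof -
  have "{mm * mm..} \<subseteq> SS"
  proof
    fix x assume "x \<in> {mm * mm..}"
    hence x: "mm * mm \<le> x" by simp
    define q where "q = x div mm"
    define r where "r = x mod mm"
    have xq: "x = q * mm + r" unfolding q_def r_def by (rule div_mult_mod_eq[symmetric])
    have r: "r < mm" using mm_gt1 by (simp add: r_def)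
    have "mm * mm div mm \<le> x div mm" by (rule div_le_mono[OF x])
    hence "mm \<le> q" using mm_gt1 unfolding q_def by simp
    hence "r \<le> q" using r by simp
    have g0: "g 0 = mm + 1" by (simp add: g_def)
    have "x = (q - r) * mm + r * g 0" using xq \<open>r \<le> q\<close> g0 by (simp add: algebra_simps diff_mult_distrib)
    moreover have "(q - r) * mm \<in> SS" by (rule SS_mult[OF SS_mm])
    moreover have "r * g 0 \<in> SS" by (rule SS_mult[OF SS_g[OF npos]])
    ultimately show "x \<in> SS" using SS_add by simp
  qed
  hence "UNIV - SS \<subseteq> {..<mm * mm}" by (auto simp: not_less)
  hence "finite (UNIV - SS)" using finite_subset by blast
  then show ?thesis unfolding numerical_semigroup_def using SS_0 SS_add by blast
qed

lemma min_gens_SS: "min_gens SS = insert mm (g ` {..<n})"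
proof
  show "insert mm (g ` {..<n}) \<subseteq> min_gens SS"
  proof
    fix s assume s: "s \<in> insert mm (g ` {..<n})"
    have props: "s \<in> SS \<and> s \<noteq> 0 \<and> s < 2 * mm"
    proof (cases "s = mm")
      case True then show ?thesis using SS_mm mm_gt1 by simp
    next
      case False
      then obtain i where i: "i < n" "s = g i" using s by auto
      then show ?thesis using SS_g[OF i(1)] g_gt[OF i(1)] g_lt2[OF i(1)] by simp
    qed
    have "\<not> (\<exists>a\<in>SS. \<exists>b\<in>SS. a \<noteq> 0 \<and> b \<noteq> 0 \<and> a + b = s)"
    proof
      assume "\<exists>a\<in>SS. \<exists>b\<in>SS. a \<noteq> 0 \<and> b \<noteq> 0 \<and> a + b = s"
      then obtain a b where "a \<in> SS" "b \<in> SS" "a \<noteq> 0" "b \<noteq> 0" "a + b = s" by blast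
      then show False using SS_ge[of a] SS_ge[of b] props by linarith
    qed
    then show "s \<in> min_gens SS" using props by (simp add: min_gens_def)
  qed
next
  show "min_gens SS \<subseteq> insert mm (g ` {..<n})"
  proof
    fix s assume s: "s \<in> min_gens SS"
    hence sS: "s \<in> SS" and s0: "s \<noteq> 0" and nd: "\<not> (\<exists>a\<in>SS. \<exists>b\<in>SS. a \<noteq> 0 \<and> b \<noteq> 0 \<and> a + b = s)"
      by (auto simp: min_gens_def)
    obtain a \<mu> where x: "s = a * mm + val \<mu>" using sS by (auto simp: SS_def)
    show "s \<in> insert mm (g ` {..<n})"
    proof (cases a)
      case (Suc a')
      have r: "(a' * mm + val \<mu>) \<in> SS" unfolding SS_def by blast
      have eq: "s = mm + (a' * mm + val \<mu>)" using x Suc by simp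
      have "a' * mm + val \<mu> = 0"
      proof (rule ccontr)
        assume ne: "a' * mm + val \<mu> \<noteq> 0"
        have "mm \<noteq> 0" using mm_gt1 by simp
        then have "\<exists>a\<in>SS. \<exists>b\<in>SS. a \<noteq> 0 \<and> b \<noteq> 0 \<and> a + b = s"
          using SS_mm r ne eq by blast
        then show False using nd by blast
      qed
      then show ?thesis using eq by simp
    next
      case 0
      have v0: "val \<mu> \<noteq> 0" using x 0 s0 by simp
      have "\<exists>j<n. \<mu> j \<noteq> 0"
      proof (rule ccontr)
        assume "\<not> (\<exists>j<n. \<mu> j \<noteq> 0)"
        hence "\<forall>j<n. \<mu> j = 0" by simp
        hence "val \<mu> = 0" by (simp add: val_def)
        with v0 show False by simp
      qed
      then obtain j where j: "j < n" "1 \<le> \<mu> j" by auto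
      define \<mu>1 where "\<mu>1 = (\<lambda>i. \<mu> i - (if i = j then 1 else 0))"
      have v1: "val \<mu> = val \<mu>1 + 1 * g j"
        unfolding val_def \<mu>1_def by (rule sum_sub_at[where f=\<mu> and w=g and j=j and c=1, OF j])
      have "val \<mu>1 = 0"
      proof (rule ccontr)
        assume ne: "val \<mu>1 \<noteq> 0"
        have "g j \<noteq> 0" using g_gt[OF j(1)] by simp
        moreover have "s = val \<mu>1 + g j" using v1 x 0 by simp
        ultimately have "\<exists>a\<in>SS. \<exists>b\<in>SS. a \<noteq> 0 \<and> b \<noteq> 0 \<and> a + b = s"
          using SS_val[of \<mu>1] SS_g[OF j(1)] ne by blast
        then show False using nd by blast
      qed
      then show ?thesis using v1 x 0 j by simp
    qed
  qed
qed

lemma mult_SS: "multiplicity_ns SS = mm"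
  unfolding multiplicity_ns_def min_gens_SS
proof (rule Min_eqI)
  show "finite (insert mm (g ` {..<n}))" by simp
  show "mm \<in> insert mm (g ` {..<n})" by simp
  fix y assume "y \<in> insert mm (g ` {..<n})"
  then show "mm \<le> y"
  proof
    assume "y \<in> g ` {..<n}"
    then obtain i where "i < n" "y = g i" by auto
    then show ?thesis using g_gt[of i] by simp
  qed simp
qed

lemma emb_SS: "embedding_dimension SS = Suc n"
  unfolding embedding_dimension_def min_gens_SS
  using card_image[OF inj_g] mm_notin by simp

lemma apery_SS: "apery SS = RR"
proof
  show "apery SS \<subseteq> RR"
  proof
    fix s assume "s \<in> apery SS"
    hence sS: "s \<in> SS" and na: "\<not> (mm \<le> s \<and> s - mm \<in> SS)" by (auto simp: apery_def mult_SS)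
    obtain lam c where lc: "\<forall>i<n. lam i < d i" "s = val lam + c * mm" using SS_norm[OF sS] by blast
    have "c = 0"
    proof (rule ccontr)
      assume "c \<noteq> 0"
      then obtain c' where c: "c = Suc c'" by (cases c) auto
      have "s - mm = c' * mm + val lam" using lc c by simp
      hence "s - mm \<in> SS" unfolding SS_def by blast
      moreover have "mm \<le> s" using lc c by simp
      ultimately show False using na by simp
    qed
    then show "s \<in> RR" using lc unfolding RR_def by auto
  qed
next
  show "RR \<subseteq> apery SS"
  proof
    fix s assume "s \<in> RR"
    then obtain lam where l: "\<forall>i<n. lam i < d i" "s = val lam" unfolding RR_def by blast
    have "\<not> (mm \<le> s \<and> s - mm \<in> SS)"
    proof
      assume a: "mm \<le> s \<and> s - mm \<in> SS"
      obtain lam' c where lc: "\<forall>i<n. lam' i < d i" "s - mm = val lam' + c * mm" using SS_norm a by blast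
      have "s = (s - mm) + mm" using a by simp
      hence e: "val lam = val lam' + Suc c * mm" using lc l by simp
      define P where "P = (\<Sum>i<n. lam i * M i)"
      define P' where "P' = (\<Sum>i<n. lam' i * M i)"
      have P: "P < mm" using bound[of n lam] l by (simp add: P_def mm_def)
      have P': "P' < mm" using bound[of n lam'] lc by (simp add: P'_def mm_def)
      have "(\<Sum>i<n. lam i) * mm + P = ((\<Sum>i<n. lam' i) + Suc c) * mm + P'"
        using e val_eq[of lam] val_eq[of lam'] by (simp add: P_def P'_def algebra_simps)
      hence "((\<Sum>i<n. lam i) * mm + P) mod mm = (((\<Sum>i<n. lam' i) + Suc c) * mm + P') mod mm" by simp
      hence "P mod mm = P' mod mm" unfolding mod_mult_self3 .
      hence "P = P'" using P P' by simp
      hence PP: "(\<Sum>i<n. lam i * M i) = (\<Sum>i<n. lam' i * M i)" by (simp add: P_def P'_def)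
      have "\<forall>i<n. lam i = lam' i" by (rule uniq[OF order_refl l(1) lc(1) PP])
      hence "val lam = val lam'" unfolding val_def by (intro sum.cong) auto
      then show False using e mm_gt1 by simp
    qed
    then show "s \<in> apery SS" using l SS_val by (simp add: apery_def mult_SS)
  qed
qed

lemma alpha_SS: "i < n \<Longrightarrow> alpha_ns SS (g i) = d i - 1"
proof -
  assume i: "i < n"
  have "{h. h * g i \<in> apery SS} = {..<d i}"
  proof (intro set_eqI iffI)
    fix h assume "h \<in> {..<d i}"
    hence hi: "h < d i" by simp
    have "\<forall>k<n. (if k = i then h else 0) < d k"
    proof (intro allI impI)
      fix k assume "k < n"
      then show "(if k = i then h else 0) < d k" using d_pos[of k] hi by simp
    qed
    hence "val (\<lambda>k. if k = i then h else 0) \<in> RR" unfolding RR_def by blast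
    then show "h \<in> {h. h * g i \<in> apery SS}" using val_single[OF i] apery_SS by simp
  next
    fix h assume h: "h \<in> {h. h * g i \<in> apery SS}"
    show "h \<in> {..<d i}"
    proof (rule ccontr)
      assume "h \<notin> {..<d i}"
      hence hd: "d i \<le> h" by simp
      have d2i: "2 \<le> d i" using d2[OF i] .
      have dg': "d i * g i = d i * mm + M (Suc i)" using dg[OF i] .
      have hg: "h * g i = (h - d i) * g i + d i * g i" using hd by (simp add: diff_mult_distrib)
      have A: "(h - d i) * g i \<in> SS" by (rule SS_mult[OF SS_g[OF i]])
      have dm: "d i * mm = mm + (d i - 1) * mm" using d2i by (intro sucmul) simp
      have B: "d i * g i - mm \<in> SS"
      proof (cases "Suc i < n")
        case True
        have dm2: "(d i - 1) * mm = mm + (d i - 1 - 1) * mm" using d2i by (intro sucmul) simp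
        have dd: "d i - 1 - 1 = d i - 2" by simp
        have "d i * g i - mm = g (Suc i) + (d i - 2) * mm"
          using dg' dm dm2 dd by (simp add: g_def)
        then show ?thesis using SS_add[OF SS_g[OF True] SS_mult[OF SS_mm]] by simp
      next
        case False
        hence "Suc i = n" using i by simp
        hence "d i * g i - mm = d i * mm" using dg' by (simp add: mm_def)
        then show ?thesis using SS_mult[OF SS_mm] by simp
      qed
      have C: "mm \<le> d i * g i" using dg' dm by simp
      have "h * g i - mm = (h - d i) * g i + (d i * g i - mm)" using hg C by linarith
      hence "h * g i - mm \<in> SS" using SS_add[OF A B] by simp
      moreover have "mm \<le> h * g i" using hg C by linarith
      ultimately show False using h by (simp add: apery_def mult_SS)
    qed
  qed
  moreover have "Max {..<d i} = d i - 1"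
  proof (rule Max_eqI)
    show "finite {..<d i}" by simp
    show "d i - 1 \<in> {..<d i}" using d_pos[OF i] by simp
    fix y assume "y \<in> {..<d i}" then show "y \<le> d i - 1" by simp
  qed
  ultimately show ?thesis unfolding alpha_ns_def by simp
qed

lemma rect_SS: "alpha_rectangular SS"
proof -
  have G: "min_gens SS - {multiplicity_ns SS} = g ` {..<n}"
    using mm_notin by (simp add: min_gens_SS mult_SS)
  have sumeq: "(\<Sum>x\<in>g ` {..<n}. lam x * x) = val (\<lambda>i. lam (g i))" for lam
    unfolding val_def by (simp add: sum.reindex[OF inj_g])
  have "apery SS = {(\<Sum>x\<in>g ` {..<n}. lam x * x) | lam. \<forall>x\<in>g ` {..<n}. lam x \<le> alpha_ns SS x}"
  proof (intro set_eqI iffI)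
    fix s assume "s \<in> apery SS"
    then obtain l where l: "\<forall>i<n. l i < d i" "s = val l" using apery_SS unfolding RR_def by blast
    define lam where "lam = (\<lambda>x. l (inv_into {..<n} g x))"
    have lg: "lam (g i) = l i" if "i < n" for i
      using that inv_into_f_f[OF inj_g] by (simp add: lam_def)
    have "val (\<lambda>i. lam (g i)) = val l" unfolding val_def by (intro sum.cong) (auto simp: lg)
    moreover have "\<forall>x\<in>g ` {..<n}. lam x \<le> alpha_ns SS x"
    proof
      fix x assume "x \<in> g ` {..<n}"
      then obtain i where i: "i < n" "x = g i" by auto
      have "l i < d i" using l i by simp
      then show "lam x \<le> alpha_ns SS x" using i lg[OF i(1)] alpha_SS[OF i(1)] by simp
    qed
    moreover have "s = (\<Sum>x\<in>g ` {..<n}. lam x * x)" using sumeq[of lam] calculation(1) l(2) by simp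
    ultimately show "s \<in> {(\<Sum>x\<in>g ` {..<n}. lam x * x) | lam. \<forall>x\<in>g ` {..<n}. lam x \<le> alpha_ns SS x}"
      by blast
  next
    fix s assume "s \<in> {(\<Sum>x\<in>g ` {..<n}. lam x * x) | lam. \<forall>x\<in>g ` {..<n}. lam x \<le> alpha_ns SS x}"
    then obtain lam where l: "\<forall>x\<in>g ` {..<n}. lam x \<le> alpha_ns SS x" "s = val (\<lambda>i. lam (g i))"
      using sumeq by auto
    have "\<forall>i<n. lam (g i) < d i"
    proof (intro allI impI)
      fix i assume i: "i < n"
      have "lam (g i) \<le> alpha_ns SS (g i)" using l(1) i by simp
      hence "lam (g i) \<le> d i - 1" using alpha_SS[OF i] by simp
      then show "lam (g i) < d i" using d_pos[OF i] by simp
    qed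
    then show "s \<in> apery SS" using l apery_SS unfolding RR_def by blast
  qed
  then show ?thesis unfolding alpha_rectangular_def Let_def G .
qed

end

theorem mainTheorem11:
  fixes m \<nu> :: nat
  assumes "m > 0" and "\<nu> \<ge> 2"
    and "size (prime_factorization m) \<ge> \<nu> - 1"
  shows "\<exists>S. numerical_semigroup S \<and> multiplicity_ns S = m \<and>
             embedding_dimension S = \<nu> \<and> alpha_rectangular S"
proof -
  define n where "n = \<nu> - 1"
  have n1: "n \<ge> 1" using assms(2) by (simp add: n_def)
  obtain d where d: "\<forall>i<n. 2 \<le> d i" "(\<Prod>i<n. d i) = m"
    using factor_split[OF assms(1) n1] assms(3) unfolding n_def by blast
  interpret R: rect d n
    by unfold_locales (use d n1 in auto)
  have "R.mm = m" using d(2) by (simp add: R.mm_def R.M_def)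
  moreover have "Suc n = \<nu>" using assms(2) by (simp add: n_def)
  ultimately show ?thesis using R.numsg R.mult_SS R.emb_SS R.rect_SS by metis
qed

end
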